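(* Let $(e,f)$ be an edge of $\Sigma$ contained in the two triangles $\sigma=(e,f,g)$ and $\sigma'=(e,f,g')$, and suppose $(e,f)$ is carved out by the ratio $m:m'$ with $m,m'$ coprime monomials in $R$, labelled so that $g(m'/m)>0$. Let $\Gamma_\sigma=\{r_\chi\}_{\chi\in G^\vee}$ and $\Gamma_{\sigma'}=\{r'_\chi\}_{\chi\in G^\vee}$ be the $G$-graphs of the charts $A_\sigma$, $A_{\sigma'}$. If $r_\chi\neq r'_\chi$ for some $\chi\in G^\vee$, then $m\mid r_\chi$ and $m'\mid r'_\chi$.
   Context: $G\subset SL_3(\mathbb{C})$ finite abelian, $R=\mathbb{C}[x,y,z]$; $Y=G\text{-Hilb}(\mathbb{C}^3)$ with universal family $\mathcal{M}$ normalised so that $\mathcal{M}^G\cong\mathcal{O}_Y$ (viewing $\mathcal{M}$ as a sheaf of $(R\rtimes G)\otimes\mathcal{O}_Y$-modules on $Y$). Laurent monomials $x^{m_1}y^{m_2}z^{m_3}$ are identified with $(m_1,m_2,m_3)\in\mathbb{Z}^3$; $M$ is the sublattice of $G$-invariant Laurent monomials and $L\subset\mathbb{Q}^3$ its dual lattice, with pairing $e(m)=\sum e_im_i$; for $e\in L$ and a Laurent monomial $m$, $e(m)$ equals the ($\mathbb{Q}$-)valuation of $m$ along the toric divisor $E_e$. $Y$ is the toric variety given by a triangulation $\Sigma$ of the junior simplex $\Delta=\{e\in\mathbb{R}^3_{\ge0}:\sum e_i=1\}$ with vertices $L\cap\Delta$; a triangle $\sigma$ of $\Sigma$ gives an affine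 toric chart $A_\sigma\cong\mathbb{C}^3$ with torus fixed point $E_\sigma$. An edge $(e,f)$ of $\Sigma$ is carved out by $m:m'$ if $m,m'$ are coprime monomials in $R$ with $m/m'$ generating the rank-one sublattice of $M$ orthogonal to $e$ and $f$. There is a unique embedding of $\mathcal{M}$ as $(R\rtimes G)\otimes\mathcal{O}_Y$-modules into the constant sheaf $\mathbb{C}(x,y,z)$ restricting to the identity on $\mathcal{O}_Y=\mathcal{M}^G$; under it, for each $\chi\in G^\vee$ the isotypic summand of $\mathcal{M}$ of character $\chi$ is, on each chart $A_\sigma$, generated as an $\mathcal{O}_Y$-module by a unique monomial $r_\chi$ of character $\chi$. The set $\Gamma_\sigma=\{r_\chi\}_{\chi\in G^\vee}$ is the $G$-graph of $A_\sigma$; it is exactly the set of monomials of $R$ not lying in the ideal of the $G$-cluster parametrised by $E_\sigma$. *)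

theory Defs
  imports "HOL-Analysis.Analysis"
begin

text \<open>G is a finite abelian subgroup of SL_3(C), acting diagonally on x,y,z
(coordinates in which the monomials are eigenvectors); an element is recorded
by its diagonal entries, a vector in complex^3.\<close>

definition gmul :: "complex^3 \<Rightarrow> complex^3 \<Rightarrow> complex^3" where
  "gmul g h = (\<chi> i. g $ i * h $ i)"

definition diag_SL3_group :: "(complex^3) set \<Rightarrow> bool" where
  "diag_SL3_group G \<longleftrightarrow> finite G \<and> vec 1 \<in> G
     \<and> (\<forall>g\<in>G. \<forall>h\<in>G. gmul g h \<in> G)
     \<and> (\<forall>g\<in>G. (\<Prod>i\<in>UNIV. g $ i) = 1)"

definition Gdual :: "(complex^3) set \<Rightarrow> (complex^3 \<Rightarrow> complex) set" where
  "Gdual G = {c. (\<forall>g\<in>G. \<forall>h\<in>G. c (gmul g h) = c g * c h)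
                 \<and> (\<forall>g\<in>G. c g \<noteq> 0) \<and> (\<forall>g. g \<notin> G \<longrightarrow> c g = 0)}"

text \<open>Laurent monomial x^n1 y^n2 z^n3 is identified with n :: int^3; its character.\<close>
definition char_of :: "(complex^3) set \<Rightarrow> int^3 \<Rightarrow> (complex^3 \<Rightarrow> complex)" where
  "char_of G n = (\<lambda>g. if g \<in> G then (\<Prod>i\<in>UNIV. (g $ i) powi (n $ i)) else 0)"

text \<open>Monomials of R = C[x,y,z]: nonnegative exponents.\<close>
definition inR :: "int^3 \<Rightarrow> bool" where
  "inR n \<longleftrightarrow> (\<forall>i. 0 \<le> n $ i)"

definition mdvd :: "int^3 \<Rightarrow> int^3 \<Rightarrow> bool" where
  "mdvd m r \<longleftrightarrow> (\<forall>i. m $ i \<le> r $ i)"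

definition mcoprime :: "int^3 \<Rightarrow> int^3 \<Rightarrow> bool" where
  "mcoprime m m' \<longleftrightarrow> (\<forall>i. m $ i = 0 \<or> m' $ i = 0)"

definition Mlat :: "(complex^3) set \<Rightarrow> (int^3) set" where
  "Mlat G = {n. char_of G n = char_of G 0}"

definition pairing :: "rat^3 \<Rightarrow> int^3 \<Rightarrow> rat" where
  "pairing e n = (\<Sum>i\<in>UNIV. e $ i * of_int (n $ i))"

definition Llat :: "(complex^3) set \<Rightarrow> (rat^3) set" where
  "Llat G = {e. \<forall>n\<in>Mlat G. pairing e n \<in> \<int>}"

definition junior :: "(rat^3) set" where
  "junior = {e. (\<forall>i. 0 \<le> e $ i) \<and> (\<Sum>i\<in>UNIV. e $ i) = 1}"

definition lin_indep3 :: "rat^3 \<Rightarrow> rat^3 \<Rightarrow> rat^3 \<Rightarrow> bool" where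
  "lin_indep3 e f g \<longleftrightarrow> (\<forall>a b c. (\<forall>i. a * e $ i + b * f $ i + c * g $ i = 0)
                                   \<longrightarrow> a = 0 \<and> b = 0 \<and> c = 0)"

text \<open>r is the generator r_chi of the chi-isotypic summand of the universal family
on the chart of the triangle (e,f,g): a monomial of R of character chi with
v(r) \<le> v(n) for every monomial n of R of character chi and every vertex v.\<close>
definition is_rchi :: "(complex^3) set \<Rightarrow> rat^3 \<Rightarrow> rat^3 \<Rightarrow> rat^3
                        \<Rightarrow> (complex^3 \<Rightarrow> complex) \<Rightarrow> int^3 \<Rightarrow> bool" where
  "is_rchi G e f g c r \<longleftrightarrow> inR r \<and> char_of G r = c
     \<and> (\<forall>n. inR n \<and> char_of G n = c \<longrightarrow>
            pairing e r \<le> pairing e n \<and> pairing f r \<le> pairing f n \<and> pairing g r \<le> pairing g n)"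

text \<open>Triangles of the triangulation Sigma of G-Hilb: nondegenerate lattice triangles
in the junior simplex whose chart carries a generator r_chi for every chi.\<close>
definition GHilb_triangle :: "(complex^3) set \<Rightarrow> rat^3 \<Rightarrow> rat^3 \<Rightarrow> rat^3 \<Rightarrow> bool" where
  "GHilb_triangle G e f g \<longleftrightarrow> e \<in> Llat G \<inter> junior \<and> f \<in> Llat G \<inter> junior
     \<and> g \<in> Llat G \<inter> junior \<and> lin_indep3 e f g
     \<and> (\<forall>c\<in>Gdual G. \<exists>r. is_rchi G e f g c r)"

definition carved_out :: "(complex^3) set \<Rightarrow> rat^3 \<Rightarrow> rat^3 \<Rightarrow> int^3 \<Rightarrow> int^3 \<Rightarrow> bool" where
  "carved_out G e f m m' \<longleftrightarrow> inR m \<and> inR m' \<and> mcoprime m m'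
     \<and> m - m' \<in> Mlat G \<and> pairing e (m - m') = 0 \<and> pairing f (m - m') = 0
     \<and> (\<forall>n\<in>Mlat G. pairing e n = 0 \<and> pairing f n = 0 \<longrightarrow> (\<exists>k::int. n = of_int k * (m - m')))"

end

theory Submission
  imports Defs
begin

lemma ofnat_vec: "(of_nat n :: int^3) $ i = int n"
  by (induct n) (simp_all add: of_nat_Suc)
lemma ofint_vec: "(of_int k :: int^3) $ i = k"
proof (cases k rule: int_cases)
  case (nonneg n) then show ?thesis using ofnat_vec[of n i] by (metis of_int_of_nat_eq)
next
  case (neg n) then show ?thesis using ofnat_vec[of "Suc n" i]
    by (metis of_int_minus of_int_of_nat_eq vector_uminus_component)
qed
lemma pairing_diff: "pairing e (a - b) = pairing e a - pairing e b"
  unfolding pairing_def by (simp add: algebra_simps sum_subtractf)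
lemma pairing_smult: "pairing e (of_int k * a) = of_int k * pairing e a"
  unfolding pairing_def by (simp add: ofint_vec algebra_simps sum_distrib_left)

lemma char_diff_M:
  assumes G: "diag_SL3_group G" and eq: "char_of G r = char_of G r'"
  shows "r - r' \<in> Mlat G"
proof -
  have "char_of G (r - r') h = char_of G 0 h" for h
  proof (cases "h \<in> G")
    case True
    have nz: "h $ i \<noteq> 0" for i
    proof
      assume "h $ i = 0"
      then have "(\<Prod>i\<in>UNIV. h $ i) = 0" by (intro prod_zero) auto
      with G True show False unfolding diag_SL3_group_def by auto
    qed
    have "(\<Prod>i\<in>UNIV. (h $ i) powi (r $ i)) = (\<Prod>i\<in>UNIV. (h $ i) powi (r' $ i))"
    proof -
      have "char_of G r h = char_of G r' h" using eq by simp
      then show ?thesis using True by (simp add: char_of_def)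
    qed
    moreover have "(\<Prod>i\<in>UNIV. (h $ i) powi ((r - r') $ i))
       = (\<Prod>i\<in>UNIV. (h $ i) powi (r $ i)) / (\<Prod>i\<in>UNIV. (h $ i) powi (r' $ i))"
      by (simp add: power_int_diff nz prod_dividef)
    moreover have "(\<Prod>i\<in>UNIV. (h $ i) powi (r' $ i)) \<noteq> 0"
      by (simp add: nz)
    ultimately show ?thesis using True unfolding char_of_def by simp
  next
    case False
    then show ?thesis unfolding char_of_def by simp
  qed
  then show ?thesis unfolding Mlat_def by auto
qed

theorem lemma2p1:
  fixes G :: "(complex^3) set" and e f g g' :: "rat^3" and m m' :: "int^3"
  assumes "diag_SL3_group G"
    and "GHilb_triangle G e f g" and "GHilb_triangle G e f g'" and "g \<noteq> g'"
    and "carved_out G e f m m'"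
    and "pairing g (m' - m) > 0"
  shows "\<forall>c\<in>Gdual G. \<forall>r r'. is_rchi G e f g c r \<and> is_rchi G e f g' c r' \<and> r \<noteq> r'
           \<longrightarrow> mdvd m r \<and> mdvd m' r'"
proof (intro ballI allI impI)
  fix c r r'
  assume H: "is_rchi G e f g c r \<and> is_rchi G e f g' c r' \<and> r \<noteq> r'"
  have Rr: "inR r" "char_of G r = c" and Rr': "inR r'" "char_of G r' = c"
    using H unfolding is_rchi_def by auto
  have le1: "pairing e r \<le> pairing e r'" "pairing f r \<le> pairing f r'" "pairing g r \<le> pairing g r'"
    using H Rr' unfolding is_rchi_def by auto
  have le2: "pairing e r' \<le> pairing e r" "pairing f r' \<le> pairing f r"
    using H Rr unfolding is_rchi_def by auto
  have M: "r - r' \<in> Mlat G" using char_diff_M[OF assms(1)] Rr Rr' by simp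
  have "pairing e (r - r') = 0" "pairing f (r - r') = 0"
    using le1 le2 by (simp_all add: pairing_diff)
  then obtain k :: int where k: "r - r' = of_int k * (m - m')"
    using assms(5) M unfolding carved_out_def by blast
  have mm: "inR m" "inR m'" "mcoprime m m'" using assms(5) unfolding carved_out_def by auto
  have "pairing g (r - r') \<le> 0" using le1 by (simp add: pairing_diff)
  then have "of_int k * pairing g (m - m') \<le> 0" using k by (simp add: pairing_smult)
  moreover have "pairing g (m - m') < 0"
    using assms(6) pairing_diff[of g m' m] pairing_diff[of g m m'] by simp
  ultimately have k0: "k \<ge> 0"
  proof -
    assume a: "rat_of_int k * pairing g (m - m') \<le> 0" "pairing g (m - m') < 0"
    show "k \<ge> 0"
    proof (rule ccontr)
      assume "\<not> k \<ge> 0"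
      then have "rat_of_int k < 0" by simp
      then have "rat_of_int k * pairing g (m - m') > 0" using a(2) by (rule mult_neg_neg)
      then show False using a(1) by simp
    qed
  qed
  have "k \<noteq> 0"
  proof
    assume "k = 0"
    then have "r - r' = 0" using k by simp
    then show False using H by simp
  qed
  with k0 have k1: "k \<ge> 1" by simp
  have comp: "r $ i = r' $ i + k * (m $ i - m' $ i)" for i
  proof -
    have "(r - r') $ i = (of_int k * (m - m')) $ i" using k by simp
    then show ?thesis by (simp add: ofint_vec algebra_simps)
  qed
  have "mdvd m r"
    unfolding mdvd_def
  proof
    fix i
    have "m $ i = 0 \<or> m' $ i = 0" using mm(3) unfolding mcoprime_def by auto
    moreover have "0 \<le> m $ i" "0 \<le> r $ i" "0 \<le> r' $ i" using mm Rr Rr' unfolding inR_def by auto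
    moreover have "m $ i \<le> k * m $ i" using k1 \<open>0 \<le> m $ i\<close>
      by (simp add: mult_le_cancel_right1)
    moreover have "k * (m $ i - m' $ i) = k * m $ i - k * m' $ i" by (simp add: right_diff_distrib)
    moreover have "m $ i = 0 \<Longrightarrow> k * m $ i = 0" "m' $ i = 0 \<Longrightarrow> k * m' $ i = 0" by simp_all
    ultimately show "m $ i \<le> r $ i" using comp[of i] by linarith
  qed
  moreover have "mdvd m' r'"
    unfolding mdvd_def
  proof
    fix i
    have "m $ i = 0 \<or> m' $ i = 0" using mm(3) unfolding mcoprime_def by auto
    moreover have "0 \<le> m' $ i" "0 \<le> r $ i" "0 \<le> r' $ i" using mm Rr Rr' unfolding inR_def by auto
    moreover have "m' $ i \<le> k * m' $ i" using k1 \<open>0 \<le> m' $ i\<close>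
      by (simp add: mult_le_cancel_right1)
    moreover have "k * (m $ i - m' $ i) = k * m $ i - k * m' $ i" by (simp add: right_diff_distrib)
    moreover have "m $ i = 0 \<Longrightarrow> k * m $ i = 0" "m' $ i = 0 \<Longrightarrow> k * m' $ i = 0" by simp_all
    ultimately show "m' $ i \<le> r' $ i" using comp[of i] by linarith
  qed
  ultimately show "mdvd m r \<and> mdvd m' r'" by simp
qed

end
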